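(* Let $\Phi:\mathcal D\to\mathcal D$ be a unital completely positive map satisfying $\Phi(BDB^{-1})=B\Phi(D)B^{-1}$ for all $D\in\mathcal D$. Then there is a well-defined unital completely positive map $\Gamma: B(\ell^2(\mathbb Z))\to B(\ell^2(\mathbb Z))$ which is a bimodule map over the Laurent matrices and satisfies $\Gamma\big(\sum_{n\in\mathbb Z}D_nB^n\big)=\sum_{n\in\mathbb Z}\Phi(D_n)B^n$ in the sense of formal Fourier series, i.e. $\widehat{\Gamma(A)}(n)=\Phi(\hat A(n))$ for all $A$ and $n$. Moreover, if $\Phi$ is idempotent, then $\Gamma$ is idempotent.
   Context: $\{e_n\}_{n\in\mathbb Z}$ is the standard basis of $\ell^2(\mathbb Z)$ and $B$ is the bilateral shift $Be_n=e_{n+1}$. $\mathcal D\subseteq B(\ell^2(\mathbb Z))$ is the algebra of bounded diagonal operators (identified with $\ell^\infty(\mathbb Z)$), and $E:B(\ell^2(\mathbb Z))\to\mathcal D$ is the map keeping the diagonal entries of a matrix. For $A\in B(\ell^2(\mathbb Z))$, $\hat A(n)=E(AB^{-n})\in\mathcal D$, and $\sum_n\hat A(n)B^n$ is its formal Fourier series, which uniquely determines $A$. The Laurent matrices are the operators with matrix entries $a_{i,j}=\hat f(i-j)$ for $f\in L^\infty(\mathbb T)$; under $\ell^2(\mathbb Z)\cong L^2(\mathbb T)$, $e_n\mapsto z^n$, they are the multiplication operators by $L^\infty(\mathbb T)$ ("$L^\infty$-bimodule map"). *)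

theory Defs
  imports "HOL-Analysis.Analysis"
begin

text \<open>Operators on l2(Z) are represented by their matrices w.r.t. the standard basis e_n.
  A matrix is a bounded operator iff it is bounded on finitely supported vectors.\<close>

type_synonym mat = "int \<Rightarrow> int \<Rightarrow> complex"

definition finsupp :: "(int \<Rightarrow> complex) \<Rightarrow> bool" where
  "finsupp x \<longleftrightarrow> finite {i. x i \<noteq> 0}"

definition supp :: "(int \<Rightarrow> complex) \<Rightarrow> int set" where
  "supp x = {i. x i \<noteq> 0}"

definition mapply :: "mat \<Rightarrow> (int \<Rightarrow> complex) \<Rightarrow> int \<Rightarrow> complex" where
  "mapply A x = (\<lambda>i. \<Sum>j\<in>supp x. A i j * x j)"

definition bounded_mat :: "mat \<Rightarrow> bool" where
  "bounded_mat A \<longleftrightarrow> (\<exists>C. \<forall>x. finsupp x \<longrightarrow> (\<forall>F. finite F \<longrightarrow>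
      (\<Sum>i\<in>F. (cmod (mapply A x i))\<^sup>2) \<le> C * (\<Sum>j\<in>supp x. (cmod (x j))\<^sup>2)))"

definition BL :: "mat set" where
  "BL = {A. bounded_mat A}"

text \<open>Composition of operators = matrix product (absolutely convergent for bounded matrices).\<close>
definition mmul :: "mat \<Rightarrow> mat \<Rightarrow> mat" where
  "mmul A C = (\<lambda>i j. \<Sum>\<^sub>\<infinity>k. A i k * C k j)"

definition idm :: mat where
  "idm = (\<lambda>i j. if i = j then 1 else 0)"

text \<open>B^n for n in Z, where B e_n = e_(n+1)\<close>
definition bshift :: "int \<Rightarrow> mat" where
  "bshift n = (\<lambda>i j. if i = j + n then 1 else 0)"

definition Diag :: "mat set" where
  "Diag = {A. bounded_mat A \<and> (\<forall>i j. i \<noteq> j \<longrightarrow> A i j = 0)}"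

definition Ediag :: "mat \<Rightarrow> mat" where
  "Ediag A = (\<lambda>i j. if i = j then A i i else 0)"

definition fcoeff :: "mat \<Rightarrow> int \<Rightarrow> mat" where
  "fcoeff A n = Ediag (mmul A (bshift (- n)))"

definition Linfty :: "(real \<Rightarrow> complex) set" where
  "Linfty = {f. f \<in> borel_measurable (lebesgue_on {0..2*pi}) \<and>
      (\<exists>C. AE t in lebesgue_on {0..2*pi}. cmod (f t) \<le> C)}"

definition fourier :: "(real \<Rightarrow> complex) \<Rightarrow> int \<Rightarrow> complex" where
  "fourier f n = complex_of_real (1 / (2*pi)) *
      integral\<^sup>L (lebesgue_on {0..2*pi}) (\<lambda>t. f t * exp (- \<i> * of_int n * of_real t))"

definition Laurent :: "mat set" where
  "Laurent = {(\<lambda>i j. fourier f (i - j)) | f. f \<in> Linfty}"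

definition cnonneg :: "complex \<Rightarrow> bool" where
  "cnonneg z \<longleftrightarrow> Im z = 0 \<and> Re z \<ge> 0"

definition block_pos :: "nat \<Rightarrow> (nat \<Rightarrow> nat \<Rightarrow> mat) \<Rightarrow> bool" where
  "block_pos n M \<longleftrightarrow> (\<forall>x :: nat \<Rightarrow> int \<Rightarrow> complex. (\<forall>k<n. finsupp (x k)) \<longrightarrow>
     cnonneg (\<Sum>k<n. \<Sum>l<n. \<Sum>i\<in>supp (x k). \<Sum>j\<in>supp (x l).
        cnj (x k i) * M k l i j * x l j))"

definition linear_on :: "mat set \<Rightarrow> (mat \<Rightarrow> mat) \<Rightarrow> bool" where
  "linear_on S \<Phi> \<longleftrightarrow> (\<forall>A\<in>S. \<forall>C\<in>S. \<forall>a b :: complex.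
     \<Phi> (\<lambda>i j. a * A i j + b * C i j) = (\<lambda>i j. a * \<Phi> A i j + b * \<Phi> C i j))"

definition cp_on :: "mat set \<Rightarrow> (mat \<Rightarrow> mat) \<Rightarrow> bool" where
  "cp_on S \<Phi> \<longleftrightarrow> linear_on S \<Phi> \<and>
     (\<forall>n M. (\<forall>k<n. \<forall>l<n. M k l \<in> S) \<longrightarrow> block_pos n M \<longrightarrow> block_pos n (\<lambda>k l. \<Phi> (M k l)))"

definition ucp_on :: "mat set \<Rightarrow> (mat \<Rightarrow> mat) \<Rightarrow> bool" where
  "ucp_on S \<Phi> \<longleftrightarrow> \<Phi> ` S \<subseteq> S \<and> cp_on S \<Phi> \<and> \<Phi> idm = idm"

end

theory Submission
  imports Defs
begin


lemma infsum_single_at: "infsum (\<lambda>l. if l = a then (f l :: complex) else 0) UNIV = f a"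
proof -
  have "infsum (\<lambda>l. if l = a then f l else 0) UNIV = infsum (\<lambda>l. if l = a then f l else 0) {a}"
    by (rule infsum_cong_neutral) auto
  then show ?thesis by simp
qed

lemma mmul_bshift_left: "mmul (bshift k) M i j = M (i - k) j"
proof -
  have "mmul (bshift k) M i j = infsum (\<lambda>l. if l = i - k then M l j else 0) UNIV"
    unfolding mmul_def bshift_def by (rule infsum_cong) auto
  then show ?thesis by (simp add: infsum_single_at)
qed

lemma mmul_bshift_right: "mmul M (bshift k) i j = M i (j + k)"
proof -
  have "mmul M (bshift k) i j = infsum (\<lambda>l. if l = j + k then M i l else 0) UNIV"
    unfolding mmul_def bshift_def by (rule infsum_cong) auto
  then show ?thesis by (simp add: infsum_single_at)
qed

lemma fcoeff_eq: "fcoeff A n = (\<lambda>i j. if i = j then A i (i - n) else 0)"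
  unfolding fcoeff_def Ediag_def by (auto simp: mmul_bshift_right fun_eq_iff)

lemma tau_eq: "mmul (mmul (bshift 1) D) (bshift (-1)) = (\<lambda>i j. D (i - 1) (j - 1))"
  by (auto simp: mmul_bshift_right mmul_bshift_left fun_eq_iff)


definition L2c :: "(int \<Rightarrow> complex) \<Rightarrow> int set \<Rightarrow> real" where
  "L2c u F = sqrt (\<Sum>i\<in>F. (cmod (u i))\<^sup>2)"

lemma L2c_nonneg: "L2c u F \<ge> 0" unfolding L2c_def by (simp add: sum_nonneg)

lemma L2c_sq: "(L2c u F)\<^sup>2 = (\<Sum>i\<in>F. (cmod (u i))\<^sup>2)"
  unfolding L2c_def by (simp add: sum_nonneg)

lemma CS_fin: "cmod (\<Sum>i\<in>F. cnj (u i) * y i) \<le> L2c u F * L2c y F"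
proof -
  have "cmod (\<Sum>i\<in>F. cnj (u i) * y i) \<le> (\<Sum>i\<in>F. \<bar>cmod (u i)\<bar> * \<bar>cmod (y i)\<bar>)"
    by (rule order_trans[OF norm_sum]) (simp add: norm_mult)
  also have "\<dots> \<le> L2_set (\<lambda>i. cmod (u i)) F * L2_set (\<lambda>i. cmod (y i)) F"
    by (rule L2_set_mult_ineq)
  finally show ?thesis unfolding L2c_def L2_set_def by simp
qed

lemma sq_le_lemma:
  fixes S K :: real
  assumes "S \<ge> 0" "K \<ge> 0" "S \<le> K * sqrt S"
  shows "S \<le> K\<^sup>2"
proof (cases "S = 0")
  case True then show ?thesis by simp
next
  case False
  then have "sqrt S > 0" using assms by simp
  have "sqrt S * sqrt S \<le> K * sqrt S" using assms by simp
  then have "sqrt S \<le> K" using \<open>sqrt S > 0\<close> by (rule mult_right_le_imp_le)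
  then have "(sqrt S)\<^sup>2 \<le> K\<^sup>2" using \<open>sqrt S > 0\<close> by (intro power_mono) auto
  then show ?thesis using assms by simp
qed

lemma cnj_mult_self: "cnj z * z = complex_of_real ((cmod z)\<^sup>2)"
  by (metis complex_norm_square mult.commute)

lemma mult_cnj_self: "z * cnj z = complex_of_real ((cmod z)\<^sup>2)"
  by (metis complex_norm_square)

definition bilin_bd :: "mat \<Rightarrow> real \<Rightarrow> bool" where
  "bilin_bd A K \<longleftrightarrow> K \<ge> 0 \<and> (\<forall>F G u v. finite F \<longrightarrow> finite G \<longrightarrow>
     cmod (\<Sum>i\<in>F. \<Sum>j\<in>G. cnj (u i) * A i j * v j) \<le> K * L2c u F * L2c v G)"

lemma bilin_bd_D:
  assumes "bilin_bd A K" "finite F" "finite G"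
  shows "cmod (\<Sum>i\<in>F. \<Sum>j\<in>G. cnj (u i) * A i j * v j) \<le> K * L2c u F * L2c v G"
  using assms unfolding bilin_bd_def by blast

lemma bilin_bd_nonneg: "bilin_bd A K \<Longrightarrow> K \<ge> 0"
  unfolding bilin_bd_def by blast

lemma mapply_restrict:
  assumes "finite G"
  shows "mapply A (\<lambda>j. if j \<in> G then v j else 0) i = (\<Sum>j\<in>G. A i j * v j)"
proof -
  let ?x = "\<lambda>j. if j \<in> G then v j else 0"
  have "supp ?x \<subseteq> G" unfolding supp_def by auto
  then have "(\<Sum>j\<in>supp ?x. A i j * ?x j) = (\<Sum>j\<in>G. A i j * ?x j)"
    by (intro sum.mono_neutral_left assms) (auto simp: supp_def)
  then show ?thesis unfolding mapply_def by simp
qed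

lemma bm_bilin:
  assumes "bounded_mat A"
  shows "\<exists>K. bilin_bd A K"
proof -
  obtain C where C: "\<And>x F. finsupp x \<Longrightarrow> finite F \<Longrightarrow>
      (\<Sum>i\<in>F. (cmod (mapply A x i))\<^sup>2) \<le> C * (\<Sum>j\<in>supp x. (cmod (x j))\<^sup>2)"
    using assms unfolding bounded_mat_def by blast
  define K where "K = sqrt (max C 0)"
  have "bilin_bd A K"
    unfolding bilin_bd_def
  proof (intro conjI allI impI)
    show "K \<ge> 0" unfolding K_def by simp
    fix F G :: "int set" and u v :: "int \<Rightarrow> complex"
    assume F: "finite F" and G: "finite G"
    define x where "x = (\<lambda>j. if j \<in> G then v j else 0)"
    define y where "y = mapply A x"
    have sx: "supp x \<subseteq> G" unfolding supp_def x_def by auto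
    then have fx: "finsupp x" unfolding finsupp_def supp_def[symmetric] using G finite_subset by blast
    have y: "y i = (\<Sum>j\<in>G. A i j * v j)" for i unfolding y_def x_def by (rule mapply_restrict[OF G])
    have "(\<Sum>i\<in>F. \<Sum>j\<in>G. cnj (u i) * A i j * v j) = (\<Sum>i\<in>F. cnj (u i) * y i)"
      by (simp add: y sum_distrib_left mult.assoc)
    then have "cmod (\<Sum>i\<in>F. \<Sum>j\<in>G. cnj (u i) * A i j * v j) \<le> L2c u F * L2c y F"
      using CS_fin by simp
    also have "L2c y F \<le> K * L2c v G"
    proof -
      have "(L2c y F)\<^sup>2 \<le> C * (\<Sum>j\<in>supp x. (cmod (x j))\<^sup>2)"
        unfolding L2c_sq y_def by (rule C[OF fx F])
      also have "\<dots> \<le> max C 0 * (\<Sum>j\<in>supp x. (cmod (x j))\<^sup>2)"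
        by (intro mult_right_mono) (auto simp: sum_nonneg)
      also have "(\<Sum>j\<in>supp x. (cmod (x j))\<^sup>2) \<le> (\<Sum>j\<in>G. (cmod (v j))\<^sup>2)"
      proof -
        have "(\<Sum>j\<in>supp x. (cmod (x j))\<^sup>2) = (\<Sum>j\<in>supp x. (cmod (v j))\<^sup>2)"
          using sx by (intro sum.cong) (auto simp: x_def)
        also have "\<dots> \<le> (\<Sum>j\<in>G. (cmod (v j))\<^sup>2)"
          by (intro sum_mono2 G sx) auto
        finally show ?thesis .
      qed
      then have "max C 0 * (\<Sum>j\<in>supp x. (cmod (x j))\<^sup>2) \<le> max C 0 * (L2c v G)\<^sup>2"
        unfolding L2c_sq by (intro mult_left_mono) auto
      also have "\<dots> = (K * L2c v G)\<^sup>2" unfolding K_def by (simp add: power_mult_distrib)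
      finally have "(L2c y F)\<^sup>2 \<le> (K * L2c v G)\<^sup>2" .
      moreover have "K * L2c v G \<ge> 0" unfolding K_def using L2c_nonneg by simp
      ultimately show ?thesis by (rule power2_le_imp_le)
    qed
    then have "L2c u F * L2c y F \<le> L2c u F * (K * L2c v G)"
      by (intro mult_left_mono L2c_nonneg)
    finally show "cmod (\<Sum>i\<in>F. \<Sum>j\<in>G. cnj (u i) * A i j * v j) \<le> K * L2c u F * L2c v G"
      by (simp add: mult_ac)
  qed
  then show ?thesis by blast
qed

lemma bilin_bm:
  assumes "bilin_bd A K"
  shows "bounded_mat A"
  unfolding bounded_mat_def
proof (intro exI allI impI)
  fix x :: "int \<Rightarrow> complex" and F :: "int set" assume fx: "finsupp x" and F: "finite F"
  have K: "K \<ge> 0" using assms(1) by (rule bilin_bd_nonneg)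
  have fs: "finite (supp x)" using fx unfolding finsupp_def supp_def .
  define y where "y = mapply A x"
  define S where "S = (\<Sum>i\<in>F. (cmod (y i))\<^sup>2)"
  have "(\<Sum>i\<in>F. \<Sum>j\<in>supp x. cnj (y i) * A i j * x j) = (\<Sum>i\<in>F. cnj (y i) * y i)"
    unfolding y_def mapply_def by (simp add: sum_distrib_left mult.assoc)
  also have "\<dots> = of_real S" unfolding S_def of_real_sum
    by (simp add: cnj_mult_self)
  finally have eq: "(\<Sum>i\<in>F. \<Sum>j\<in>supp x. cnj (y i) * A i j * x j) = of_real S" .
  have "S \<ge> 0" unfolding S_def by (simp add: sum_nonneg)
  then have "S = cmod (\<Sum>i\<in>F. \<Sum>j\<in>supp x. cnj (y i) * A i j * x j)"
    unfolding eq by simp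
  also have "\<dots> \<le> K * L2c y F * L2c x (supp x)"
    using assms F fs unfolding bilin_bd_def by blast
  finally have "S \<le> (K * L2c x (supp x)) * sqrt S" unfolding L2c_def S_def by (simp add: mult_ac)
  then have "S \<le> (K * L2c x (supp x))\<^sup>2"
    by (intro sq_le_lemma) (auto simp: S_def sum_nonneg K L2c_nonneg)
  then show "(\<Sum>i\<in>F. (cmod (mapply A x i))\<^sup>2) \<le> K\<^sup>2 * (\<Sum>j\<in>supp x. (cmod (x j))\<^sup>2)"
    unfolding S_def y_def by (simp add: power_mult_distrib L2c_sq)
qed

lemma bilin_col:
  assumes "bilin_bd A K" "finite H"
  shows "(\<Sum>i\<in>H. (cmod (A i j))\<^sup>2) \<le> K\<^sup>2"
proof -
  define S where "S = (\<Sum>i\<in>H. (cmod (A i j))\<^sup>2)"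
  have K: "K \<ge> 0" using assms(1) by (rule bilin_bd_nonneg)
  have eq: "(\<Sum>i\<in>H. \<Sum>j'\<in>{j}. cnj (A i j) * A i j' * 1) = of_real S"
    unfolding S_def of_real_sum by (simp add: cnj_mult_self)
  have "S \<ge> 0" unfolding S_def by (simp add: sum_nonneg)
  then have "S = cmod (\<Sum>i\<in>H. \<Sum>j'\<in>{j}. cnj (A i j) * A i j' * 1)"
    unfolding eq by simp
  also have "\<dots> \<le> K * L2c (\<lambda>i. A i j) H * L2c (\<lambda>_. 1) {j}"
    by (rule bilin_bd_D[OF assms(1)]) (use assms in auto)
  finally have "S \<le> K * sqrt S" by (simp add: L2c_def S_def)
  then show ?thesis unfolding S_def[symmetric] by (intro sq_le_lemma) (auto simp: S_def sum_nonneg K)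
qed

lemma bilin_row:
  assumes "bilin_bd A K" "finite H"
  shows "(\<Sum>j\<in>H. (cmod (A i j))\<^sup>2) \<le> K\<^sup>2"
proof -
  define S where "S = (\<Sum>j\<in>H. (cmod (A i j))\<^sup>2)"
  have K: "K \<ge> 0" using assms(1) by (rule bilin_bd_nonneg)
  have eq: "(\<Sum>i'\<in>{i}. \<Sum>j\<in>H. cnj 1 * A i' j * cnj (A i j)) = of_real S"
    unfolding S_def of_real_sum by (simp add: mult_cnj_self)
  have "S \<ge> 0" unfolding S_def by (simp add: sum_nonneg)
  then have "S = cmod (\<Sum>i'\<in>{i}. \<Sum>j\<in>H. cnj 1 * A i' j * cnj (A i j))"
    unfolding eq by simp
  also have "\<dots> \<le> K * L2c (\<lambda>_. 1) {i} * L2c (\<lambda>j. cnj (A i j)) H"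
    by (rule bilin_bd_D[OF assms(1)]) (use assms in auto)
  finally have "S \<le> K * sqrt S" by (simp add: L2c_def S_def)
  then show ?thesis unfolding S_def[symmetric] by (intro sq_le_lemma) (auto simp: S_def sum_nonneg K)
qed

lemma bilin_entry:
  assumes "bilin_bd A K"
  shows "cmod (A i j) \<le> K"
proof -
  have "(\<Sum>i'\<in>{i}. (cmod (A i' j))\<^sup>2) \<le> K\<^sup>2" by (rule bilin_col[OF assms]) simp
  then have "(cmod (A i j))\<^sup>2 \<le> K\<^sup>2" by simp
  then show ?thesis by (rule power2_le_imp_le) (rule bilin_bd_nonneg[OF assms])
qed


definition dg :: "(int \<Rightarrow> complex) \<Rightarrow> mat" where
  "dg g = (\<lambda>i j. if i = j then g i else 0)"

definition bnd :: "(int \<Rightarrow> complex) \<Rightarrow> bool" where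
  "bnd g \<longleftrightarrow> (\<exists>C. \<forall>m. cmod (g m) \<le> C)"

lemma bndI: "(\<And>m. cmod (g m) \<le> C) \<Longrightarrow> bnd g" unfolding bnd_def by blast

lemma bnd_const[simp]: "bnd (\<lambda>_. c)" by (rule bndI[of _ "cmod c"]) simp

lemma bnd_lin[intro]: "bnd g \<Longrightarrow> bnd h \<Longrightarrow> bnd (\<lambda>m. a * g m + b * h m)"
proof -
  assume "bnd g" "bnd h"
  then obtain C D where C: "\<And>m. cmod (g m) \<le> C" and D: "\<And>m. cmod (h m) \<le> D" unfolding bnd_def by blast
  show ?thesis
  proof (rule bndI)
    fix m
    have "cmod (a * g m + b * h m) \<le> cmod a * cmod (g m) + cmod b * cmod (h m)"
      by (metis norm_mult norm_triangle_ineq)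
    also have "\<dots> \<le> cmod a * C + cmod b * D"
      by (intro add_mono mult_left_mono C D) auto
    finally show "cmod (a * g m + b * h m) \<le> cmod a * C + cmod b * D" .
  qed
qed

lemma bnd_add[intro]: "bnd g \<Longrightarrow> bnd h \<Longrightarrow> bnd (\<lambda>m. g m + h m)"
  using bnd_lin[of g h 1 1] by simp

lemma bnd_diff[intro]: "bnd g \<Longrightarrow> bnd h \<Longrightarrow> bnd (\<lambda>m. g m - h m)"
  using bnd_lin[of g h 1 "-1"] by simp

lemma bnd_scale[intro]: "bnd g \<Longrightarrow> bnd (\<lambda>m. a * g m)"
  using bnd_lin[of g g a 0] by simp

lemma bnd_scale_r[intro]: "bnd g \<Longrightarrow> bnd (\<lambda>m. g m * a)"
  using bnd_lin[of g g a 0] by (simp add: mult.commute)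

lemma bnd_sum[intro]: "(\<And>s. s \<in> S \<Longrightarrow> bnd (f s)) \<Longrightarrow> bnd (\<lambda>m. \<Sum>s\<in>S. f s m)"
proof (induction S rule: infinite_finite_induct)
  case (insert x F)
  then have "bnd (\<lambda>m. f x m + (\<Sum>s\<in>F. f s m))" by (intro bnd_add) auto
  then show ?case using insert by simp
qed auto

lemma bnd_shift[intro]: "bnd g \<Longrightarrow> bnd (\<lambda>m. g (m + i))"
  unfolding bnd_def by blast

lemma bnd_re[intro]: "bnd g \<Longrightarrow> bnd (\<lambda>m. complex_of_real (Re (g m)))"
  unfolding bnd_def by (metis abs_Re_le_cmod norm_of_real order_trans)

lemma bnd_im[intro]: "bnd g \<Longrightarrow> bnd (\<lambda>m. complex_of_real (Im (g m)))"
  unfolding bnd_def by (metis abs_Im_le_cmod norm_of_real order_trans)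

lemma dg_in_Diag:
  assumes "bnd g"
  shows "dg g \<in> Diag"
proof -
  obtain C where C: "\<And>m. cmod (g m) \<le> C" using assms unfolding bnd_def by blast
  have C0: "C \<ge> 0" using C[of 0] norm_ge_zero order_trans by blast
  have "bounded_mat (dg g)"
    unfolding bounded_mat_def
  proof (intro exI allI impI)
    fix x :: "int \<Rightarrow> complex" and F :: "int set"
    assume fx: "finsupp x" and F: "finite F"
    have fs: "finite (supp x)" using fx unfolding finsupp_def supp_def .
    have ma: "mapply (dg g) x i = g i * x i" for i
    proof (cases "i \<in> supp x")
      case True
      then have "mapply (dg g) x i = (\<Sum>j\<in>{i}. dg g i j * x j)"
        unfolding mapply_def by (intro sum.mono_neutral_right fs) (auto simp: dg_def)
      then show ?thesis by (simp add: dg_def)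
    next
      case False
      then show ?thesis unfolding mapply_def dg_def supp_def by (auto intro!: sum.neutral)
    qed
    have "(\<Sum>i\<in>F. (cmod (mapply (dg g) x i))\<^sup>2) \<le> (\<Sum>i\<in>F. C\<^sup>2 * (cmod (x i))\<^sup>2)"
      unfolding ma norm_mult power_mult_distrib
      by (intro sum_mono mult_right_mono power_mono C) auto
    also have "\<dots> = C\<^sup>2 * (\<Sum>i\<in>F \<inter> supp x. (cmod (x i))\<^sup>2)"
      unfolding sum_distrib_left[symmetric]
      by (intro arg_cong[where f="\<lambda>t. C\<^sup>2 * t"] sum.mono_neutral_right F) (auto simp: supp_def)
    also have "\<dots> \<le> C\<^sup>2 * (\<Sum>i\<in>supp x. (cmod (x i))\<^sup>2)"
      by (intro mult_left_mono sum_mono2 fs) auto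
    finally show "(\<Sum>i\<in>F. (cmod (mapply (dg g) x i))\<^sup>2) \<le> C\<^sup>2 * (\<Sum>i\<in>supp x. (cmod (x i))\<^sup>2)" .
  qed
  then show ?thesis unfolding Diag_def dg_def by auto
qed

lemma cnonneg_add: "cnonneg a \<Longrightarrow> cnonneg b \<Longrightarrow> cnonneg (a + b)"
  unfolding cnonneg_def by auto

lemma cnonneg_sum: "(\<And>s. s \<in> S \<Longrightarrow> cnonneg (f s)) \<Longrightarrow> cnonneg (\<Sum>s\<in>S. f s)"
  by (induction S rule: infinite_finite_induct) (auto intro: cnonneg_add simp: cnonneg_def)

lemma cnonneg_real_mult: "cnonneg a \<Longrightarrow> r \<ge> 0 \<Longrightarrow> cnonneg (complex_of_real r * a)"
  unfolding cnonneg_def by auto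

lemma lessThan_one_nat: "{..<(1::nat)} = {0}" by auto

lemma block_pos_1_iff:
  "block_pos 1 M \<longleftrightarrow> (\<forall>x. finsupp x \<longrightarrow> cnonneg (\<Sum>i\<in>supp x. \<Sum>j\<in>supp x. cnj (x i) * M 0 0 i j * x j))"
proof (intro iffI allI impI)
  fix x :: "int \<Rightarrow> complex"
  assume H: "block_pos 1 M" and fx: "finsupp x"
  have "cnonneg (\<Sum>k<1. \<Sum>l<1. \<Sum>i\<in>supp x. \<Sum>j\<in>supp x. cnj (x i) * M k l i j * x j)"
    using H[unfolded block_pos_def, rule_format, of "\<lambda>_. x"] fx by simp
  then show "cnonneg (\<Sum>i\<in>supp x. \<Sum>j\<in>supp x. cnj (x i) * M 0 0 i j * x j)"
    by (simp add: lessThan_one_nat)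
next
  assume H: "\<forall>x. finsupp x \<longrightarrow> cnonneg (\<Sum>i\<in>supp x. \<Sum>j\<in>supp x. cnj (x i) * M 0 0 i j * x j)"
  show "block_pos 1 M" unfolding block_pos_def
  proof (intro allI impI)
    fix x :: "nat \<Rightarrow> int \<Rightarrow> complex"
    assume "\<forall>k<1. finsupp (x k)"
    then have "finsupp (x 0)" by simp
    then show "cnonneg (\<Sum>k<1. \<Sum>l<1. \<Sum>i\<in>supp (x k). \<Sum>j\<in>supp (x l). cnj (x k i) * M k l i j * x l j)"
      using H by (simp add: lessThan_one_nat)
  qed
qed


locale covphi =
  fixes \<Phi> :: "mat \<Rightarrow> mat"
  assumes ucp: "ucp_on Diag \<Phi>"
    and cov: "\<forall>D\<in>Diag. \<Phi> (mmul (mmul (bshift 1) D) (bshift (-1)))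
                 = mmul (mmul (bshift 1) (\<Phi> D)) (bshift (-1))"
begin

definition phi :: "(int \<Rightarrow> complex) \<Rightarrow> complex" where
  "phi g = \<Phi> (dg g) 0 0"

lemma Phi_Diag: "D \<in> Diag \<Longrightarrow> \<Phi> D \<in> Diag"
  using ucp unfolding ucp_on_def by blast

lemma Phi_offdiag: "D \<in> Diag \<Longrightarrow> i \<noteq> j \<Longrightarrow> \<Phi> D i j = 0"
  using Phi_Diag unfolding Diag_def by blast

lemma Phi_lin: "D \<in> Diag \<Longrightarrow> E \<in> Diag \<Longrightarrow>
   \<Phi> (\<lambda>i j. a * D i j + b * E i j) = (\<lambda>i j. a * \<Phi> D i j + b * \<Phi> E i j)"
  using ucp unfolding ucp_on_def cp_on_def linear_on_def by blast

lemma dg_lin: "dg (\<lambda>m. a * g m + b * h m) = (\<lambda>i j. a * dg g i j + b * dg h i j)"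
  by (auto simp: dg_def fun_eq_iff)

lemma Phi_dg_lin: "bnd g \<Longrightarrow> bnd h \<Longrightarrow>
   \<Phi> (dg (\<lambda>m. a * g m + b * h m)) = (\<lambda>i j. a * \<Phi> (dg g) i j + b * \<Phi> (dg h) i j)"
  unfolding dg_lin by (intro Phi_lin dg_in_Diag)

lemma phi_lin: "bnd g \<Longrightarrow> bnd h \<Longrightarrow> phi (\<lambda>m. a * g m + b * h m) = a * phi g + b * phi h"
  unfolding phi_def by (simp add: Phi_dg_lin)

lemma phi_zero: "phi (\<lambda>_. 0) = 0"
  using phi_lin[of "\<lambda>_. 0" "\<lambda>_. 0" 0 0] by simp

lemma phi_add: "bnd g \<Longrightarrow> bnd h \<Longrightarrow> phi (\<lambda>m. g m + h m) = phi g + phi h"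
  using phi_lin[of g h 1 1] by simp

lemma phi_diff: "bnd g \<Longrightarrow> bnd h \<Longrightarrow> phi (\<lambda>m. g m - h m) = phi g - phi h"
  using phi_lin[of g h 1 "-1"] by simp

lemma phi_scale: "bnd g \<Longrightarrow> phi (\<lambda>m. a * g m) = a * phi g"
  using phi_lin[of g g a 0] by simp

lemma phi_sum: "(\<And>s. s \<in> S \<Longrightarrow> bnd (f s)) \<Longrightarrow> phi (\<lambda>m. \<Sum>s\<in>S. f s m) = (\<Sum>s\<in>S. phi (f s))"
proof (induction S rule: infinite_finite_induct)
  case (infinite A)
  then show ?case by (simp add: phi_zero)
next
  case empty
  then show ?case by (simp add: phi_zero)
next
  case (insert x F)
  have "phi (\<lambda>m. \<Sum>s\<in>insert x F. f s m) = phi (\<lambda>m. f x m + (\<Sum>s\<in>F. f s m))"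
    using insert by simp
  also have "\<dots> = phi (f x) + phi (\<lambda>m. \<Sum>s\<in>F. f s m)"
    using insert by (intro phi_add bnd_sum) auto
  finally show ?case using insert by simp
qed

lemma dg_one: "dg (\<lambda>_. 1) = idm" unfolding dg_def idm_def by auto

lemma phi_one: "phi (\<lambda>_. 1) = 1"
  using ucp unfolding phi_def dg_one ucp_on_def idm_def by simp

lemma phi_const: "phi (\<lambda>_. c) = c"
  using phi_scale[of "\<lambda>_. 1" c] phi_one by simp

lemma Phi_pos1: "M \<in> Diag \<Longrightarrow> block_pos 1 (\<lambda>k l. M) \<Longrightarrow> block_pos 1 (\<lambda>k l. \<Phi> M)"
  using ucp unfolding ucp_on_def cp_on_def by auto

lemma phi_pos:
  assumes "bnd g" "\<And>m. cnonneg (g m)"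
  shows "cnonneg (phi g)"
proof -
  have "block_pos 1 (\<lambda>k l. dg g)"
    unfolding block_pos_1_iff
  proof (intro allI impI)
    fix x :: "int \<Rightarrow> complex" assume fx: "finsupp x"
    have "(\<Sum>i\<in>supp x. \<Sum>j\<in>supp x. cnj (x i) * dg g i j * x j) = (\<Sum>i\<in>supp x. cnj (x i) * g i * x i)"
    proof (intro sum.cong refl)
      fix i assume i: "i \<in> supp x"
      have "(\<Sum>j\<in>supp x. cnj (x i) * dg g i j * x j) = (\<Sum>j\<in>{i}. cnj (x i) * dg g i j * x j)"
        using fx i by (intro sum.mono_neutral_right) (auto simp: dg_def finsupp_def supp_def)
      then show "(\<Sum>j\<in>supp x. cnj (x i) * dg g i j * x j) = cnj (x i) * g i * x i"
        by (simp add: dg_def)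
    qed
    also have "\<dots> = (\<Sum>i\<in>supp x. complex_of_real ((cmod (x i))\<^sup>2) * g i)"
      by (intro sum.cong refl) (metis cnj_mult_self mult.commute mult.left_commute)
    finally have eq: "(\<Sum>i\<in>supp x. \<Sum>j\<in>supp x. cnj (x i) * dg g i j * x j) = (\<Sum>i\<in>supp x. complex_of_real ((cmod (x i))\<^sup>2) * g i)" .
    show "cnonneg (\<Sum>i\<in>supp x. \<Sum>j\<in>supp x. cnj (x i) * dg g i j * x j)"
      unfolding eq by (intro cnonneg_sum cnonneg_real_mult assms(2) zero_le_power2)
  qed
  then have "block_pos 1 (\<lambda>k l. \<Phi> (dg g))"
    by (intro Phi_pos1 dg_in_Diag assms(1))
  then have H: "\<forall>x. finsupp x \<longrightarrow> cnonneg (\<Sum>i\<in>supp x. \<Sum>j\<in>supp x. cnj (x i) * \<Phi> (dg g) i j * x j)"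
    unfolding block_pos_1_iff by simp
  define e :: "int \<Rightarrow> complex" where "e = (\<lambda>i. if i = 0 then 1 else 0)"
  have se: "supp e = {0}" unfolding supp_def e_def by auto
  have "finsupp e" unfolding finsupp_def supp_def[symmetric] se by simp
  then have "cnonneg (\<Sum>i\<in>supp e. \<Sum>j\<in>supp e. cnj (e i) * \<Phi> (dg g) i j * e j)" using H by blast
  then show ?thesis unfolding se phi_def by (simp add: e_def)
qed

lemma phi_real_le:
  assumes "bnd g" "\<And>m. Im (g m) = 0" "\<And>m. Re (g m) \<le> C"
  shows "Im (phi g) = 0 \<and> Re (phi g) \<le> C"
proof -
  have "cnonneg (phi (\<lambda>m. complex_of_real C - g m))"
    using assms by (intro phi_pos) (auto simp: cnonneg_def)
  moreover have "phi (\<lambda>m. complex_of_real C - g m) = complex_of_real C - phi g"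
    using assms by (simp add: phi_diff phi_const)
  ultimately show ?thesis unfolding cnonneg_def by simp
qed

lemma phi_bound:
  assumes C: "\<And>m. cmod (g m) \<le> C"
  shows "cmod (phi g) \<le> C"
proof (cases "phi g = 0")
  case True
  then show ?thesis using order_trans[OF norm_ge_zero C[of 0]] by simp
next
  case False
  have bg: "bnd g" using C by (rule bndI)
  define z where "z = phi g"
  define th where "th = cnj z / complex_of_real (cmod z)"
  define h where "h = (\<lambda>m. th * g m)"
  have bh: "bnd h" unfolding h_def using bg by auto
  have "phi h = th * z" unfolding h_def z_def using bg by (rule phi_scale)
  also have "\<dots> = complex_of_real (cmod z)" unfolding th_def using False z_def
    by (simp add: complex_norm_square[symmetric] power2_eq_square field_simps mult.commute[of _ "cnj z"])
  finally have phz: "phi h = complex_of_real (cmod z)" .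
  have cth: "cmod th = 1" unfolding th_def using False z_def by (simp add: norm_divide)
  have hsplit: "h = (\<lambda>m. 1 * complex_of_real (Re (h m)) + \<i> * complex_of_real (Im (h m)))"
    by (auto simp: fun_eq_iff complex_eq_iff)
  have "phi h = 1 * phi (\<lambda>m. complex_of_real (Re (h m))) + \<i> * phi (\<lambda>m. complex_of_real (Im (h m)))"
    by (subst hsplit) (intro phi_lin bnd_re bnd_im bh)
  moreover have "Im (phi (\<lambda>m. complex_of_real (Re (h m)))) = 0 \<and> Re (phi (\<lambda>m. complex_of_real (Re (h m)))) \<le> C"
  proof (rule phi_real_le)
    fix m
    have "Re (h m) \<le> cmod (h m)" by (rule complex_Re_le_cmod)
    also have "\<dots> = cmod (g m)" unfolding h_def norm_mult cth by simp
    finally show "Re (complex_of_real (Re (h m))) \<le> C" using C[of m] by simp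
  qed (use bh in auto)
  moreover have "Im (phi (\<lambda>m. complex_of_real (Im (h m)))) = 0 \<and> Re (phi (\<lambda>m. complex_of_real (Im (h m)))) \<le> C"
  proof (rule phi_real_le)
    fix m
    have "Im (h m) \<le> cmod (h m)" using abs_Im_le_cmod[of "h m"] by linarith
    also have "\<dots> = cmod (g m)" unfolding h_def norm_mult cth by simp
    finally show "Re (complex_of_real (Im (h m))) \<le> C" using C[of m] by simp
  qed (use bh in auto)
  ultimately have "Re (phi h) \<le> C" by simp
  then show ?thesis using phz z_def by simp
qed

end


context covphi begin

lemma tau_dg: "mmul (mmul (bshift 1) (dg g)) (bshift (-1)) = dg (\<lambda>m. g (m - 1))"
  unfolding tau_eq by (auto simp: dg_def fun_eq_iff)

lemma cov_dg: "bnd g \<Longrightarrow> \<Phi> (dg (\<lambda>m. g (m - 1))) i i = \<Phi> (dg g) (i - 1) (i - 1)"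
  using cov dg_in_Diag[of g] unfolding tau_dg[symmetric] by (simp add: tau_eq)

lemma bnd_shift_minus: "bnd g \<Longrightarrow> bnd (\<lambda>m. g (m - i))"
  unfolding bnd_def by blast

lemma shift_nat: "bnd g \<Longrightarrow> \<Phi> (dg (\<lambda>m. g (m - int n))) i i = \<Phi> (dg g) (i - int n) (i - int n)"
proof (induction n arbitrary: i)
  case 0
  then show ?case by simp
next
  case (Suc n)
  have "\<Phi> (dg (\<lambda>m. g (m - int (Suc n)))) i i = \<Phi> (dg (\<lambda>m. (\<lambda>m. g (m - int n)) (m - 1))) i i"
    by (simp add: algebra_simps)
  also have "\<dots> = \<Phi> (dg (\<lambda>m. g (m - int n))) (i - 1) (i - 1)"
    using Suc.prems by (intro cov_dg bnd_shift_minus)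
  also have "\<dots> = \<Phi> (dg g) (i - 1 - int n) (i - 1 - int n)"
    using Suc by blast
  finally show ?case by (simp add: algebra_simps)
qed

lemma shift_int: "bnd g \<Longrightarrow> \<Phi> (dg (\<lambda>m. g (m - k))) i i = \<Phi> (dg g) (i - k) (i - k)"
proof (cases "k \<ge> 0")
  case True
  assume "bnd g"
  then show ?thesis using shift_nat[of g "nat k" i] True by simp
next
  case False
  assume bg: "bnd g"
  define n where "n = nat (- k)"
  have k: "k = - int n" using False n_def by simp
  have "\<Phi> (dg (\<lambda>m. (\<lambda>m. g (m - k)) (m - int n))) (i - k) (i - k)
       = \<Phi> (dg (\<lambda>m. g (m - k))) (i - k - int n) (i - k - int n)"
    using bg by (intro shift_nat bnd_shift_minus)
  then show ?thesis by (simp add: k)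
qed

lemma phi_shift: "bnd g \<Longrightarrow> \<Phi> (dg g) i i = phi (\<lambda>m. g (m + i))"
  unfolding phi_def using shift_int[of "\<lambda>m. g (m + i)" i i] by auto

definition Gam :: "mat \<Rightarrow> mat" where
  "Gam A = (\<lambda>i j. phi (\<lambda>m. A (i + m) (j + m)))"

lemma bnd_entries: "bilin_bd A K \<Longrightarrow> bnd (\<lambda>m. A (i + m) (j + m))"
  by (rule bndI[of _ K]) (rule bilin_entry)

lemma BL_bilin: "A \<in> BL \<Longrightarrow> \<exists>K. bilin_bd A K"
  unfolding BL_def using bm_bilin by blast

lemma fcoeff_dg: "fcoeff A n = dg (\<lambda>m. A m (m - n))"
  unfolding fcoeff_eq dg_def by auto

lemma fcoeff_Diag: "A \<in> BL \<Longrightarrow> fcoeff A n \<in> Diag"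
proof -
  assume "A \<in> BL"
  then obtain K where K: "bilin_bd A K" using BL_bilin by blast
  show ?thesis unfolding fcoeff_dg by (intro dg_in_Diag bndI[of _ K] bilin_entry[OF K])
qed

lemma Gam_fcoeff:
  assumes "A \<in> BL"
  shows "fcoeff (Gam A) n = \<Phi> (fcoeff A n)"
proof -
  obtain K where K: "bilin_bd A K" using BL_bilin assms by blast
  have b: "bnd (\<lambda>m. A m (m - n))" by (intro bndI[of _ K] bilin_entry[OF K])
  show ?thesis
  proof (intro ext)
    fix i j
    show "fcoeff (Gam A) n i j = \<Phi> (fcoeff A n) i j"
    proof (cases "i = j")
      case True
      have "\<Phi> (fcoeff A n) i i = phi (\<lambda>m. A (m + i) (m + i - n))"
        unfolding fcoeff_dg using b by (subst phi_shift) auto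
      also have "\<dots> = Gam A i (i - n)" unfolding Gam_def by (simp add: algebra_simps)
      finally show ?thesis using True by (simp add: fcoeff_eq)
    next
      case False
      then show ?thesis using Phi_offdiag[OF fcoeff_Diag[OF assms]] by (simp add: fcoeff_eq)
    qed
  qed
qed

lemma mat_from_fcoeff: "M i j = fcoeff M (i - j) i i"
  by (simp add: fcoeff_eq)

lemma phi_pull:
  assumes "\<And>i j. bnd (X i j)"
  shows "phi (\<lambda>m. \<Sum>i\<in>F. \<Sum>j\<in>G. a i * X i j m * b j) = (\<Sum>i\<in>F. \<Sum>j\<in>G. a i * phi (X i j) * b j)"
proof -
  have "phi (\<lambda>m. \<Sum>i\<in>F. \<Sum>j\<in>G. a i * X i j m * b j) = (\<Sum>i\<in>F. phi (\<lambda>m. \<Sum>j\<in>G. a i * X i j m * b j))"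
    using assms by (intro phi_sum bnd_sum) (simp add: mult.commute[of _ "b _"] mult.assoc bnd_scale)
  also have "\<dots> = (\<Sum>i\<in>F. \<Sum>j\<in>G. phi (\<lambda>m. a i * X i j m * b j))"
    using assms by (intro sum.cong refl phi_sum) (simp add: mult.commute[of _ "b _"] mult.assoc bnd_scale)
  also have "\<dots> = (\<Sum>i\<in>F. \<Sum>j\<in>G. a i * phi (X i j) * b j)"
  proof (intro sum.cong refl)
    fix i j
    have "phi (\<lambda>m. a i * X i j m * b j) = phi (\<lambda>m. (a i * b j) * X i j m)" by (simp add: mult_ac)
    also have "\<dots> = (a i * b j) * phi (X i j)" using assms by (rule phi_scale)
    finally show "phi (\<lambda>m. a i * X i j m * b j) = a i * phi (X i j) * b j" by (simp add: mult_ac)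
  qed
  finally show ?thesis .
qed

lemma L2c_shift: "L2c (\<lambda>i. u (i - m)) ((\<lambda>i. i + m) ` F) = L2c u F"
  unfolding L2c_def by (subst sum.reindex) (auto simp: inj_on_def)

lemma sum_shift2:
  fixes A :: mat and m :: int and u v :: "int \<Rightarrow> complex"
  shows
  "(\<Sum>i\<in>F. \<Sum>j\<in>G. cnj (u i) * A (i + m) (j + m) * v j) =
   (\<Sum>i\<in>(\<lambda>i. i + m) ` F. \<Sum>j\<in>(\<lambda>j. j + m) ` G. cnj (u (i - m)) * A i j * v (j - m))"
proof -
  have inj: "\<And>S. inj_on (\<lambda>i::int. i + m) S" by (auto simp: inj_on_def)
  show ?thesis by (simp add: sum.reindex[OF inj])
qed

lemma Gam_bilin:
  assumes "bilin_bd A K"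
  shows "bilin_bd (Gam A) K"
  unfolding bilin_bd_def
proof (intro conjI allI impI)
  show "K \<ge> 0" using assms by (rule bilin_bd_nonneg)
  fix F G :: "int set" and u v :: "int \<Rightarrow> complex"
  assume F: "finite F" and G: "finite G"
  have "(\<Sum>i\<in>F. \<Sum>j\<in>G. cnj (u i) * Gam A i j * v j) =
        phi (\<lambda>m. \<Sum>i\<in>F. \<Sum>j\<in>G. cnj (u i) * A (i + m) (j + m) * v j)"
    unfolding Gam_def by (rule phi_pull[symmetric]) (rule bnd_entries[OF assms])
  also have "cmod \<dots> \<le> K * L2c u F * L2c v G"
  proof (rule phi_bound)
    fix m
    show "cmod (\<Sum>i\<in>F. \<Sum>j\<in>G. cnj (u i) * A (i + m) (j + m) * v j) \<le> K * L2c u F * L2c v G"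
      unfolding sum_shift2 L2c_shift[of u m F, symmetric] L2c_shift[of v m G, symmetric]
      using F G by (intro bilin_bd_D[OF assms]) auto
  qed
  finally show "cmod (\<Sum>i\<in>F. \<Sum>j\<in>G. cnj (u i) * Gam A i j * v j) \<le> K * L2c u F * L2c v G" .
qed

lemma Gam_BL: "A \<in> BL \<Longrightarrow> Gam A \<in> BL"
  using BL_bilin Gam_bilin bilin_bm unfolding BL_def by blast

lemma Gam_idem:
  assumes idem: "\<forall>D\<in>Diag. \<Phi> (\<Phi> D) = \<Phi> D" and A: "A \<in> BL"
  shows "Gam (Gam A) = Gam A"
proof (intro ext)
  fix i j
  have "Gam (Gam A) i j = \<Phi> (\<Phi> (fcoeff A (i - j))) i i"
    by (subst mat_from_fcoeff) (simp add: Gam_fcoeff Gam_BL A)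
  also have "\<dots> = \<Phi> (fcoeff A (i - j)) i i" using idem fcoeff_Diag[OF A] by simp
  also have "\<dots> = Gam A i j"
    by (subst (2) mat_from_fcoeff) (simp add: Gam_fcoeff A)
  finally show "Gam (Gam A) i j = Gam A i j" .
qed

lemma Gam_idm: "Gam idm = idm"
  unfolding Gam_def idm_def by (auto simp: fun_eq_iff phi_const)

lemma Gam_linear: "linear_on BL Gam"
  unfolding linear_on_def
proof (intro ballI allI)
  fix A C a b assume A: "A \<in> BL" and C: "C \<in> BL"
  obtain K1 where K1: "bilin_bd A K1" using BL_bilin A by blast
  obtain K2 where K2: "bilin_bd C K2" using BL_bilin C by blast
  show "Gam (\<lambda>i j. a * A i j + b * C i j) = (\<lambda>i j. a * Gam A i j + b * Gam C i j)"
    unfolding Gam_def by (intro ext phi_lin bnd_entries[OF K1] bnd_entries[OF K2])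
qed

end


lemma supp_shift: "supp (\<lambda>i. x (i - m)) = (\<lambda>i. i + m) ` supp x"
proof
  show "supp (\<lambda>i. x (i - m)) \<subseteq> (\<lambda>i. i + m) ` supp x"
  proof
    fix i assume "i \<in> supp (\<lambda>i. x (i - m))"
    then have "i - m \<in> supp x" "i = (i - m) + m" unfolding supp_def by auto
    then show "i \<in> (\<lambda>i. i + m) ` supp x" by blast
  qed
qed (auto simp: supp_def)

lemma finsupp_shift: "finsupp x \<Longrightarrow> finsupp (\<lambda>i. x (i - m))"
  unfolding finsupp_def supp_def[symmetric] supp_shift by simp

context covphi begin

lemma Gam_block_pos:
  assumes M: "\<forall>k<n. \<forall>l<n. M k l \<in> BL" and bp: "block_pos n M"
  shows "block_pos n (\<lambda>k l. Gam (M k l))"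
  unfolding block_pos_def
proof (intro allI impI)
  fix x :: "nat \<Rightarrow> int \<Rightarrow> complex"
  assume fx: "\<forall>k<n. finsupp (x k)"
  define X where "X = (\<lambda>k l m. \<Sum>i\<in>supp (x k). \<Sum>j\<in>supp (x l). cnj (x k i) * M k l (i + m) (j + m) * x l j)"
  have bX: "bnd (X k l)" if kl: "k < n" "l < n" for k l
  proof -
    obtain K where K: "bilin_bd (M k l) K" using BL_bilin M kl by blast
    show ?thesis unfolding X_def
      by (intro bnd_sum bnd_scale bnd_scale_r bnd_entries[OF K])
  qed
  have "(\<Sum>k<n. \<Sum>l<n. \<Sum>i\<in>supp (x k). \<Sum>j\<in>supp (x l). cnj (x k i) * Gam (M k l) i j * x l j)
      = (\<Sum>k<n. \<Sum>l<n. phi (X k l))"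
  proof (intro sum.cong refl)
    fix k l assume "k \<in> {..<n}" "l \<in> {..<n}"
    then obtain K where K: "bilin_bd (M k l) K" using BL_bilin M by blast
    show "(\<Sum>i\<in>supp (x k). \<Sum>j\<in>supp (x l). cnj (x k i) * Gam (M k l) i j * x l j) = phi (X k l)"
      unfolding X_def Gam_def by (rule phi_pull[symmetric]) (rule bnd_entries[OF K])
  qed
  also have "\<dots> = (\<Sum>k<n. phi (\<lambda>m. \<Sum>l<n. X k l m))"
    using bX by (intro sum.cong refl phi_sum[symmetric]) auto
  also have "\<dots> = phi (\<lambda>m. \<Sum>k<n. \<Sum>l<n. X k l m)"
    using bX by (intro phi_sum[symmetric] bnd_sum) auto
  finally have eq: "(\<Sum>k<n. \<Sum>l<n. \<Sum>i\<in>supp (x k). \<Sum>j\<in>supp (x l). cnj (x k i) * Gam (M k l) i j * x l j)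
      = phi (\<lambda>m. \<Sum>k<n. \<Sum>l<n. X k l m)" .
  show "cnonneg (\<Sum>k<n. \<Sum>l<n. \<Sum>i\<in>supp (x k). \<Sum>j\<in>supp (x l). cnj (x k i) * Gam (M k l) i j * x l j)"
    unfolding eq
  proof (rule phi_pos)
    show "bnd (\<lambda>m. \<Sum>k<n. \<Sum>l<n. X k l m)" using bX by (intro bnd_sum) auto
    fix m
    define y where "y = (\<lambda>k i. x k (i - m))"
    have fy: "\<forall>k<n. finsupp (y k)" using fx unfolding y_def by (auto intro: finsupp_shift)
    have "(\<Sum>k<n. \<Sum>l<n. X k l m) =
       (\<Sum>k<n. \<Sum>l<n. \<Sum>i\<in>supp (y k). \<Sum>j\<in>supp (y l). cnj (y k i) * M k l i j * y l j)"
      unfolding X_def y_def supp_shift by (intro sum.cong refl sum_shift2)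
    also have "cnonneg \<dots>" using bp fy unfolding block_pos_def by blast
    finally show "cnonneg (\<Sum>k<n. \<Sum>l<n. X k l m)" .
  qed
qed

lemma Gam_ucp: "ucp_on BL Gam"
  unfolding ucp_on_def cp_on_def
  using Gam_BL Gam_linear Gam_block_pos Gam_idm by blast

end


lemma CS_fin2: "cmod (\<Sum>i\<in>F. a i * y i) \<le> L2c a F * L2c y F"
proof -
  have "cmod (\<Sum>i\<in>F. a i * y i) \<le> (\<Sum>i\<in>F. \<bar>cmod (a i)\<bar> * \<bar>cmod (y i)\<bar>)"
    by (rule order_trans[OF norm_sum]) (simp add: norm_mult)
  also have "\<dots> \<le> L2_set (\<lambda>i. cmod (a i)) F * L2_set (\<lambda>i. cmod (y i)) F"
    by (rule L2_set_mult_ineq)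
  finally show ?thesis unfolding L2c_def L2_set_def by simp
qed

lemma L2c_le: "(\<Sum>i\<in>F. (cmod (a i))\<^sup>2) \<le> C \<Longrightarrow> L2c a F \<le> sqrt C"
  unfolding L2c_def by simp

lemma has_sum_bound_fin:
  fixes f :: "'a \<Rightarrow> complex"
  assumes "(f has_sum S) X" "\<And>H. finite H \<Longrightarrow> H \<subseteq> X \<Longrightarrow> cmod (sum f H) \<le> B"
  shows "cmod S \<le> B"
proof -
  have "((\<lambda>H. cmod (sum f H)) \<longlongrightarrow> cmod S) (finite_subsets_at_top X)"
    using assms(1) unfolding has_sum_def by (rule tendsto_norm)
  moreover have "eventually (\<lambda>H. cmod (sum f H) \<le> B) (finite_subsets_at_top X)"
    unfolding eventually_finite_subsets_at_top using assms(2) by blast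
  ultimately show ?thesis
    by (intro tendsto_upperbound) (auto simp: finite_subsets_at_top_neq_bot)
qed

lemma tail_small:
  fixes a :: "int \<Rightarrow> complex"
  assumes a: "\<And>H. finite H \<Longrightarrow> (\<Sum>k\<in>H. (cmod (a k))\<^sup>2) \<le> Ca" and e: "e > 0"
  shows "\<exists>F0. finite F0 \<and> (\<forall>H. finite H \<longrightarrow> H \<inter> F0 = {} \<longrightarrow> (\<Sum>k\<in>H. (cmod (a k))\<^sup>2) \<le> e)"
proof -
  let ?q = "\<lambda>k. (cmod (a k))\<^sup>2"
  have sq: "?q summable_on UNIV"
    by (rule nonneg_bdd_above_summable_on) (auto intro!: bdd_aboveI[of _ Ca] a)
  obtain F0 where F0: "finite F0" "dist (sum ?q F0) (infsum ?q UNIV) \<le> e"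
    using has_sum_finite_approximation[OF has_sum_infsum[OF sq] e] by blast
  have "(\<Sum>k\<in>H. ?q k) \<le> e" if H: "finite H" "H \<inter> F0 = {}" for H
  proof -
    have "sum ?q H + sum ?q F0 = sum ?q (H \<union> F0)" using H F0 by (simp add: sum.union_disjoint)
    also have "\<dots> \<le> infsum ?q UNIV" using H F0 sq by (intro finite_sum_le_infsum) auto
    finally show ?thesis using F0(2) by (simp add: dist_real_def)
  qed
  then show ?thesis using F0 by blast
qed

context covphi begin

lemma phi_infsum:
  fixes a :: "int \<Rightarrow> complex" and G :: "int \<Rightarrow> int \<Rightarrow> complex"
  assumes a: "\<And>H. finite H \<Longrightarrow> (\<Sum>k\<in>H. (cmod (a k))\<^sup>2) \<le> Ca"
    and G: "\<And>m H. finite H \<Longrightarrow> (\<Sum>k\<in>H. (cmod (G k m))\<^sup>2) \<le> K"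
  shows "infsum (\<lambda>k. a k * phi (G k)) UNIV = phi (\<lambda>m. infsum (\<lambda>k. a k * G k m) UNIV)"
proof -
  have K0: "K \<ge> 0" using G[of "{}"] by simp
  have Ca0: "Ca \<ge> 0" using a[of "{}"] by simp
  define T where "T = (\<lambda>m. infsum (\<lambda>k. a k * G k m) UNIV)"
  have finb: "cmod (\<Sum>k\<in>H. a k * G k m) \<le> L2c a H * sqrt K" if "finite H" for H m
    using CS_fin2[of a "\<lambda>k. G k m" H] L2c_le[OF G[OF that, of m]] L2c_nonneg[of a H]
    by (meson mult_left_mono order_trans)
  have finb2: "cmod (\<Sum>k\<in>H. a k * G k m) \<le> sqrt Ca * sqrt K" if "finite H" for H m
    using finb[OF that, of m] L2c_le[OF a[OF that]] K0
    by (meson mult_right_mono real_sqrt_ge_zero order_trans)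
  have summ: "(\<lambda>k. a k * G k m) summable_on UNIV" for m
  proof (rule abs_summable_summable)
    show "(\<lambda>k. norm (a k * G k m)) summable_on UNIV"
      unfolding abs_summable_iff_bdd_above
    proof (rule bdd_aboveI[of _ "sqrt Ca * sqrt K"], clarify)
      fix H :: "int set" assume H: "finite H"
      have "(\<Sum>k\<in>H. norm (a k * G k m)) = cmod (\<Sum>k\<in>H. complex_of_real (cmod (a k)) * complex_of_real (cmod (G k m)))"
        by (simp add: norm_mult sum_nonneg flip: of_real_mult of_real_sum)
      also have "\<dots> \<le> L2c (\<lambda>k. complex_of_real (cmod (a k))) H * L2c (\<lambda>k. complex_of_real (cmod (G k m))) H"
        by (rule CS_fin2)
      also have "\<dots> = L2c a H * L2c (\<lambda>k. G k m) H" unfolding L2c_def by simp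
      also have "\<dots> \<le> sqrt Ca * sqrt K"
        by (intro mult_mono L2c_le a G H) (auto simp: Ca0 L2c_nonneg)
      finally show "(\<Sum>k\<in>H. norm (a k * G k m)) \<le> sqrt Ca * sqrt K" .
    qed
  qed
  have bT: "cmod (T m) \<le> sqrt Ca * sqrt K" for m
    unfolding T_def by (rule has_sum_bound_fin[OF has_sum_infsum[OF summ]]) (rule finb2)
  have bG: "bnd (G k)" for k
  proof (rule bndI[of _ "sqrt K"])
    fix m
    have "(\<Sum>k'\<in>{k}. (cmod (G k' m))\<^sup>2) \<le> K" by (rule G) simp
    then show "cmod (G k m) \<le> sqrt K" by (simp add: real_le_rsqrt)
  qed
  have hs: "((\<lambda>k. a k * phi (G k)) has_sum phi T) UNIV"
    unfolding has_sum_def tendsto_iff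
  proof (intro allI impI)
    fix e :: real assume e: "e > 0"
    define d where "d = (e / (2 * (sqrt K + 1)))\<^sup>2"
    have sK: "sqrt K + 1 > 0" using K0 by (simp add: add_nonneg_pos)
    have d: "d > 0" unfolding d_def using e sK by simp
    obtain F0 where F0: "finite F0"
      and tl: "\<And>H. finite H \<Longrightarrow> H \<inter> F0 = {} \<Longrightarrow> (\<Sum>k\<in>H. (cmod (a k))\<^sup>2) \<le> d"
      using tail_small[OF a d] by blast
    have sd: "sqrt d * sqrt K \<le> e / 2"
    proof -
      have "sqrt d = e / (2 * (sqrt K + 1))" unfolding d_def using e sK by simp
      then have "sqrt d * sqrt K = (e / 2) * (sqrt K / (sqrt K + 1))" by simp
      also have "\<dots> \<le> (e / 2) * 1" using e sK by (intro mult_left_mono) (auto simp: divide_le_eq)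
      finally show ?thesis by simp
    qed
    show "\<forall>\<^sub>F F in finite_subsets_at_top UNIV. dist (\<Sum>k\<in>F. a k * phi (G k)) (phi T) < e"
      unfolding eventually_finite_subsets_at_top
    proof (intro exI[of _ F0] conjI allI impI)
      fix F assume F: "finite F \<and> F0 \<subseteq> F \<and> F \<subseteq> UNIV"
      have tailT: "cmod ((\<Sum>k\<in>F. a k * G k m) - T m) \<le> e / 2" for m
      proof -
        have hF: "((\<lambda>k. a k * G k m) has_sum (\<Sum>k\<in>F. a k * G k m)) F" using F by simp
        have sR: "(\<lambda>k. a k * G k m) summable_on (UNIV - F)"
          by (rule summable_on_subset_banach[OF summ]) auto
        have "((\<lambda>k. a k * G k m) has_sum ((\<Sum>k\<in>F. a k * G k m) + infsum (\<lambda>k. a k * G k m) (UNIV - F))) (F \<union> (UNIV - F))"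
          by (intro has_sum_Un_disjoint hF has_sum_infsum sR) auto
        then have "T m = (\<Sum>k\<in>F. a k * G k m) + infsum (\<lambda>k. a k * G k m) (UNIV - F)"
          unfolding T_def by (simp add: infsumI)
        then have "(\<Sum>k\<in>F. a k * G k m) - T m = - infsum (\<lambda>k. a k * G k m) (UNIV - F)" by simp
        moreover have "cmod (infsum (\<lambda>k. a k * G k m) (UNIV - F)) \<le> e / 2"
        proof (rule has_sum_bound_fin[OF has_sum_infsum[OF sR]])
          fix H assume H: "finite H" "H \<subseteq> UNIV - F"
          then have "H \<inter> F0 = {}" using F by auto
          then have "L2c a H \<le> sqrt d" using tl H by (intro L2c_le) auto
          then have "L2c a H * sqrt K \<le> sqrt d * sqrt K" using K0 by (intro mult_right_mono) auto
          then show "cmod (sum (\<lambda>k. a k * G k m) H) \<le> e / 2" using finb[OF H(1), of m] sd by linarith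
        qed
        ultimately show ?thesis by simp
      qed
      have bS: "bnd (\<lambda>m. \<Sum>k\<in>F. a k * G k m)" using bG by (intro bnd_sum bnd_scale)
      have bTT: "bnd T" by (rule bndI) (rule bT)
      have "(\<Sum>k\<in>F. a k * phi (G k)) = phi (\<lambda>m. \<Sum>k\<in>F. a k * G k m)"
        using bG by (subst phi_sum) (auto intro: bnd_scale simp: phi_scale)
      then have "dist (\<Sum>k\<in>F. a k * phi (G k)) (phi T) = cmod (phi (\<lambda>m. (\<Sum>k\<in>F. a k * G k m) - T m))"
        using bS bTT by (simp add: dist_norm phi_diff)
      also have "\<dots> \<le> e / 2" by (rule phi_bound) (rule tailT)
      also have "\<dots> < e" using e by simp
      finally show "dist (\<Sum>k\<in>F. a k * phi (G k)) (phi T) < e" .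
    qed (use F0 in auto)
  qed
  then show ?thesis unfolding T_def by (rule infsumI)
qed

end


lemma bij_plus_int: "bij (\<lambda>k::int. k + m)"
  by (rule bij_betwI[of _ _ _ "\<lambda>k. k - m"]) auto

lemma infsum_shift: "infsum (\<lambda>k::int. f (k + m)) UNIV = infsum f UNIV"
  using infsum_reindex_bij_betw[OF bij_plus_int[of m], of f] by simp

lemma sq_shift_bound:
  assumes "\<And>N. finite N \<Longrightarrow> (\<Sum>n\<in>N. (cmod (c n))\<^sup>2) \<le> Ca" "finite H" "inj (g :: int \<Rightarrow> int)"
  shows "(\<Sum>k\<in>H. (cmod (c (g k)))\<^sup>2) \<le> Ca"
proof -
  have "(\<Sum>k\<in>H. (cmod (c (g k)))\<^sup>2) = (\<Sum>n\<in>g ` H. (cmod (c n))\<^sup>2)"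
    using assms(3) by (subst sum.reindex) (auto intro: inj_on_subset)
  also have "\<dots> \<le> Ca" using assms by simp
  finally show ?thesis .
qed

context covphi begin

lemma Gam_laurent:
  assumes c: "\<And>N. finite N \<Longrightarrow> (\<Sum>n\<in>N. (cmod (c n))\<^sup>2) \<le> Ca" and A: "A \<in> BL"
  shows "Gam (mmul (\<lambda>i j. c (i - j)) A) = mmul (\<lambda>i j. c (i - j)) (Gam A)
       \<and> Gam (mmul A (\<lambda>i j. c (i - j))) = mmul (Gam A) (\<lambda>i j. c (i - j))"
proof
  obtain K where K: "bilin_bd A K" using BL_bilin A by blast
  have inj1: "inj (\<lambda>k::int. i - k)" for i by (auto simp: inj_on_def)
  have inj2: "inj (\<lambda>k::int. k - j)" for j by (auto simp: inj_on_def)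
  have inj3: "inj (\<lambda>k::int. k + m)" for m by (auto simp: inj_on_def)
  show "Gam (mmul (\<lambda>i j. c (i - j)) A) = mmul (\<lambda>i j. c (i - j)) (Gam A)"
  proof (intro ext)
    fix i j
    have "Gam (mmul (\<lambda>i j. c (i - j)) A) i j = phi (\<lambda>m. infsum (\<lambda>k. c (i + m - k) * A k (j + m)) UNIV)"
      unfolding Gam_def mmul_def by simp
    also have "\<dots> = phi (\<lambda>m. infsum (\<lambda>k. c (i - k) * A (k + m) (j + m)) UNIV)"
    proof -
      have "infsum (\<lambda>k. c (i + m - k) * A k (j + m)) UNIV = infsum (\<lambda>k. c (i - k) * A (k + m) (j + m)) UNIV" for m
        using infsum_shift[of "\<lambda>k. c (i + m - k) * A k (j + m)" m] by simp
      then show ?thesis by simp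
    qed
    also have "\<dots> = infsum (\<lambda>k. c (i - k) * phi (\<lambda>m. A (k + m) (j + m))) UNIV"
    proof (rule phi_infsum[symmetric])
      fix H :: "int set" assume H: "finite H"
      show "(\<Sum>k\<in>H. (cmod (c (i - k)))\<^sup>2) \<le> Ca" by (rule sq_shift_bound[OF c H inj1])
    next
      fix m and H :: "int set" assume H: "finite H"
      have "(\<Sum>k\<in>H. (cmod (A (k + m) (j + m)))\<^sup>2) = (\<Sum>k\<in>(\<lambda>k. k + m) ` H. (cmod (A k (j + m)))\<^sup>2)"
        by (subst sum.reindex) (auto intro: inj_on_subset[OF inj3])
      also have "\<dots> \<le> K\<^sup>2" using H by (intro bilin_col[OF K]) auto
      finally show "(\<Sum>k\<in>H. (cmod (A (k + m) (j + m)))\<^sup>2) \<le> K\<^sup>2" .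
    qed
    also have "\<dots> = mmul (\<lambda>i j. c (i - j)) (Gam A) i j" unfolding mmul_def Gam_def by simp
    finally show "Gam (mmul (\<lambda>i j. c (i - j)) A) i j = mmul (\<lambda>i j. c (i - j)) (Gam A) i j" .
  qed
  show "Gam (mmul A (\<lambda>i j. c (i - j))) = mmul (Gam A) (\<lambda>i j. c (i - j))"
  proof (intro ext)
    fix i j
    have "Gam (mmul A (\<lambda>i j. c (i - j))) i j = phi (\<lambda>m. infsum (\<lambda>k. A (i + m) k * c (k - (j + m))) UNIV)"
      unfolding Gam_def mmul_def by simp
    also have "\<dots> = phi (\<lambda>m. infsum (\<lambda>k. c (k - j) * A (i + m) (k + m)) UNIV)"
    proof -
      have "infsum (\<lambda>k. A (i + m) k * c (k - (j + m))) UNIV = infsum (\<lambda>k. c (k - j) * A (i + m) (k + m)) UNIV" for m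
        using infsum_shift[of "\<lambda>k. A (i + m) k * c (k - (j + m))" m] by (simp add: mult.commute)
      then show ?thesis by simp
    qed
    also have "\<dots> = infsum (\<lambda>k. c (k - j) * phi (\<lambda>m. A (i + m) (k + m))) UNIV"
    proof (rule phi_infsum[symmetric])
      fix H :: "int set" assume H: "finite H"
      show "(\<Sum>k\<in>H. (cmod (c (k - j)))\<^sup>2) \<le> Ca" by (rule sq_shift_bound[OF c H inj2])
    next
      fix m and H :: "int set" assume H: "finite H"
      have "(\<Sum>k\<in>H. (cmod (A (i + m) (k + m)))\<^sup>2) = (\<Sum>k\<in>(\<lambda>k. k + m) ` H. (cmod (A (i + m) k))\<^sup>2)"
        by (subst sum.reindex) (auto intro: inj_on_subset[OF inj3])
      also have "\<dots> \<le> K\<^sup>2" using H by (intro bilin_row[OF K]) auto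
      finally show "(\<Sum>k\<in>H. (cmod (A (i + m) (k + m)))\<^sup>2) \<le> K\<^sup>2" .
    qed
    also have "\<dots> = mmul (Gam A) (\<lambda>i j. c (i - j)) i j" unfolding mmul_def Gam_def by (simp add: mult.commute)
    finally show "Gam (mmul A (\<lambda>i j. c (i - j))) i j = mmul (Gam A) (\<lambda>i j. c (i - j)) i j" .
  qed
qed

end


abbreviation MM :: "real measure" where "MM \<equiv> lebesgue_on {0..2*pi}"

definition expf :: "int \<Rightarrow> real \<Rightarrow> complex" where
  "expf k t = exp (\<i> * of_int k * of_real t)"

lemma cnj_meas[measurable]: "f \<in> borel_measurable M \<Longrightarrow> (\<lambda>x. cnj (f x)) \<in> borel_measurable M"
proof -
  have "cnj \<in> borel_measurable borel"
    by (rule borel_measurable_continuous_onI) (intro continuous_intros)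
  moreover assume "f \<in> borel_measurable M"
  ultimately show ?thesis using measurable_compose by blast
qed

lemma finM: "finite_measure MM"
  by (rule finite_measure_lebesgue_on) simp

lemma intM: "h \<in> borel_measurable MM \<Longrightarrow> (\<And>t. cmod (h t) \<le> B) \<Longrightarrow> integrable MM h"
  by (rule finite_measure.integrable_const_bound[OF finM, of _ B]) auto

lemma E_meas[measurable]: "expf k \<in> borel_measurable MM"
  unfolding expf_def by (intro continuous_imp_measurable_on_sets_lebesgue continuous_intros) auto

lemma cmod_E[simp]: "cmod (expf k t) = 1"
  unfolding expf_def by (simp add: norm_exp_eq_Re)

lemma cnj_E: "cnj (expf k t) = expf (- k) t"
  unfolding expf_def by (simp add: exp_cnj)

lemma E_mult: "expf n t * expf m t = expf (n + m) t"
  unfolding expf_def by (simp add: exp_add[symmetric] algebra_simps)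

lemma int_E: "integral\<^sup>L MM (expf k) = (if k = 0 then 2 * pi else 0)"
proof -
  have i: "integrable MM (expf k)" by (rule intM[of _ 1]) auto
  have eq: "integral\<^sup>L MM (expf k) = integral {0..2*pi} (expf k)"
    by (rule lebesgue_integral_eq_integral[OF i]) simp
  show ?thesis
  proof (cases "k = 0")
    case True
    then have "expf k = (\<lambda>_. 1)" unfolding expf_def by auto
    then show ?thesis using eq True by (simp add: scaleR_conv_of_real)
  next
    case False
    define F where "F t = exp (\<i> * of_int k * t) / (\<i> * of_int k)" for t :: complex
    have d: "(F has_field_derivative exp (\<i> * of_int k * z)) (at z)" for z
      unfolding F_def using False
      by (auto intro!: derivative_eq_intros simp: field_simps)
    have "(expf k has_integral (F (of_real (2*pi)) - F (of_real 0))) {0..2*pi}"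
      unfolding expf_def
      by (rule fundamental_theorem_of_calculus) (auto intro!: has_vector_derivative_real_field d)
    moreover have "F (of_real (2*pi)) - F (of_real 0) = 0"
    proof -
      have "exp (\<i> * of_int k * of_real (2*pi)) = exp ((2 * of_int k * pi) * \<i>)"
        by (simp add: algebra_simps)
      also have "\<dots> = 1" by (rule exp_integer_2pi) simp
      finally show ?thesis unfolding F_def by simp
    qed
    ultimately show ?thesis using eq False by (simp add: integral_unique)
  qed
qed

lemma orth: "integral\<^sup>L MM (\<lambda>t. expf n t * cnj (expf m t)) = (if n = m then 2 * pi else 0)"
proof -
  have "(\<lambda>t. expf n t * cnj (expf m t)) = expf (n - m)" by (auto simp: cnj_E E_mult fun_eq_iff)
  then show ?thesis by (simp add: int_E)
qed

lemma fourier_E: "fourier g n = complex_of_real (1 / (2*pi)) * integral\<^sup>L MM (\<lambda>t. g t * cnj (expf n t))"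
proof -
  have "exp (- \<i> * of_int n * of_real t) = cnj (expf n t)" for t by (simp add: expf_def exp_cnj)
  then show ?thesis unfolding fourier_def by simp
qed

lemma bessel_bounded:
  assumes gm: "g \<in> borel_measurable MM" and gb: "\<And>t. cmod (g t) \<le> C" and N: "finite N"
  shows "(\<Sum>n\<in>N. (cmod (fourier g n))\<^sup>2) \<le> integral\<^sup>L MM (\<lambda>t. (cmod (g t))\<^sup>2) / (2 * pi)"
proof -
  define c where "c = fourier g"
  define S where "S = (\<Sum>n\<in>N. (cmod (c n))\<^sup>2)"
  define P where "P t = (\<Sum>n\<in>N. c n * expf n t)" for t
  note gm[measurable]
  have C0: "C \<ge> 0" using gb[of 0] norm_ge_zero order_trans by blast
  have i1: "integrable MM (\<lambda>t. g t * cnj (g t))"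
    by (rule intM[of _ "C * C"]) (measurable, simp add: norm_mult mult_mono gb C0)
  have i2: "integrable MM (\<lambda>t. g t * cnj (expf n t))" for n
    by (rule intM[of _ C]) (measurable, simp add: norm_mult gb)
  have i3: "integrable MM (\<lambda>t. expf n t * cnj (g t))" for n
    by (rule intM[of _ C]) (measurable, simp add: norm_mult gb)
  have i4: "integrable MM (\<lambda>t. expf n t * cnj (expf m t))" for n m
    by (rule intM[of _ 1]) (measurable, simp add: norm_mult)
  have Ig: "integral\<^sup>L MM (\<lambda>t. g t * cnj (expf n t)) = 2 * pi * c n" for n
    unfolding c_def fourier_E by simp
  have pt: "(g t - P t) * cnj (g t - P t) =
      g t * cnj (g t) - (\<Sum>n\<in>N. cnj (c n) * (g t * cnj (expf n t)))
      - (\<Sum>n\<in>N. c n * (expf n t * cnj (g t)))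
      + (\<Sum>n\<in>N. \<Sum>m\<in>N. (c m * cnj (c n)) * (expf m t * cnj (expf n t)))" for t
    unfolding P_def cnj_sum
    by (simp add: algebra_simps sum_distrib_left sum_distrib_right sum_subtractf)
  have "integral\<^sup>L MM (\<lambda>t. (g t - P t) * cnj (g t - P t)) =
      integral\<^sup>L MM (\<lambda>t. g t * cnj (g t)) - (\<Sum>n\<in>N. cnj (c n) * integral\<^sup>L MM (\<lambda>t. g t * cnj (expf n t)))
      - (\<Sum>n\<in>N. c n * integral\<^sup>L MM (\<lambda>t. expf n t * cnj (g t)))
      + (\<Sum>n\<in>N. \<Sum>m\<in>N. (c m * cnj (c n)) * integral\<^sup>L MM (\<lambda>t. expf m t * cnj (expf n t)))"
    unfolding pt using i1 i2 i3 i4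
    by (simp add: integral_diff integral_add integral_sum integrable_sum integrable_diff integrable_add)
  also have "\<dots> = of_real (integral\<^sup>L MM (\<lambda>t. (cmod (g t))\<^sup>2) - 2 * pi * S)"
  proof -
    have ms: "z * cnj z = complex_of_real ((cmod z)\<^sup>2)" for z by (metis complex_norm_square)
    have ms2: "z * cnj z = (complex_of_real (cmod z))\<^sup>2" for z by (metis complex_norm_square of_real_power)
    have a: "(\<Sum>n\<in>N. cnj (c n) * integral\<^sup>L MM (\<lambda>t. g t * cnj (expf n t))) = of_real (2 * pi * S)"
      unfolding Ig S_def of_real_mult of_real_sum sum_distrib_left
      by (intro sum.cong refl) (simp add: ms2 mult_ac)
    have b: "(\<Sum>n\<in>N. c n * integral\<^sup>L MM (\<lambda>t. expf n t * cnj (g t))) = of_real (2 * pi * S)"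
    proof -
      have "integral\<^sup>L MM (\<lambda>t. expf n t * cnj (g t)) = cnj (integral\<^sup>L MM (\<lambda>t. g t * cnj (expf n t)))" for n
      proof -
        have "(\<lambda>t. expf n t * cnj (g t)) = (\<lambda>t. cnj (g t * cnj (expf n t)))" by (auto simp: mult.commute fun_eq_iff)
        then show ?thesis by (simp only: Bochner_Integration.integral_cnj)
      qed
      then show ?thesis
        unfolding Ig S_def of_real_mult of_real_sum sum_distrib_left
        by (intro sum.cong refl) (simp add: ms2 mult_ac)
    qed
    have inner: "(\<Sum>m\<in>N. (c m * cnj (c n)) * integral\<^sup>L MM (\<lambda>t. expf m t * cnj (expf n t))) = of_real (2 * pi * (cmod (c n))\<^sup>2)"
      if n: "n \<in> N" for n
    proof -
      have "(\<Sum>m\<in>N. (c m * cnj (c n)) * integral\<^sup>L MM (\<lambda>t. expf m t * cnj (expf n t)))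
          = (\<Sum>m\<in>N. if m = n then c n * cnj (c n) * of_real (2 * pi) else 0)"
        by (intro sum.cong refl) (auto simp: orth)
      also have "\<dots> = c n * cnj (c n) * of_real (2 * pi)" using n N by simp
      also have "\<dots> = of_real (2 * pi * (cmod (c n))\<^sup>2)" unfolding ms by (simp only: of_real_mult mult_ac)
      finally show ?thesis .
    qed
    have c: "(\<Sum>n\<in>N. \<Sum>m\<in>N. (c m * cnj (c n)) * integral\<^sup>L MM (\<lambda>t. expf m t * cnj (expf n t))) = of_real (2 * pi * S)"
      unfolding S_def sum_distrib_left of_real_sum by (intro sum.cong refl inner)
    have d: "integral\<^sup>L MM (\<lambda>t. g t * cnj (g t)) = of_real (integral\<^sup>L MM (\<lambda>t. (cmod (g t))\<^sup>2))"
      by (simp only: ms integral_complex_of_real)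
    show ?thesis unfolding a b c d by simp
  qed
  finally have eq: "integral\<^sup>L MM (\<lambda>t. (g t - P t) * cnj (g t - P t)) = of_real (integral\<^sup>L MM (\<lambda>t. (cmod (g t))\<^sup>2) - 2 * pi * S)" .
  have e1: "integral\<^sup>L MM (\<lambda>t. (g t - P t) * cnj (g t - P t)) = of_real (integral\<^sup>L MM (\<lambda>t. (cmod (g t - P t))\<^sup>2))"
  proof -
    have ms: "z * cnj z = complex_of_real ((cmod z)\<^sup>2)" for z by (metis complex_norm_square)
    show ?thesis by (simp only: ms integral_complex_of_real)
  qed
  have nn: "integral\<^sup>L MM (\<lambda>t. (cmod (g t - P t))\<^sup>2) \<ge> 0" by (rule Bochner_Integration.integral_nonneg) simp
  have "integral\<^sup>L MM (\<lambda>t. (cmod (g t - P t))\<^sup>2) = integral\<^sup>L MM (\<lambda>t. (cmod (g t))\<^sup>2) - 2 * pi * S"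
  proof -
    have "(complex_of_real (integral\<^sup>L MM (\<lambda>t. (cmod (g t - P t))\<^sup>2))) = of_real (integral\<^sup>L MM (\<lambda>t. (cmod (g t))\<^sup>2) - 2 * pi * S)"
      unfolding e1[symmetric] by (rule eq)
    then show ?thesis by (simp only: of_real_eq_iff)
  qed
  then have "integral\<^sup>L MM (\<lambda>t. (cmod (g t))\<^sup>2) - 2 * pi * S \<ge> 0" using nn by linarith
  then show ?thesis unfolding S_def c_def by (simp add: field_simps)
qed

lemma laurent_sq:
  assumes "f \<in> Linfty"
  shows "\<exists>Ca. \<forall>N. finite N \<longrightarrow> (\<Sum>n\<in>N. (cmod (fourier f n))\<^sup>2) \<le> Ca"
proof -
  have fm[measurable]: "f \<in> borel_measurable MM" using assms unfolding Linfty_def by blast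
  obtain C where C: "AE t in MM. cmod (f t) \<le> C" using assms unfolding Linfty_def by blast
  define g where "g t = (if cmod (f t) \<le> C then f t else 0)" for t
  have gm[measurable]: "g \<in> borel_measurable MM" unfolding g_def by measurable
  have gb: "cmod (g t) \<le> \<bar>C\<bar>" for t unfolding g_def by auto
  have fg: "fourier f n = fourier g n" for n
  proof -
    have em[measurable]: "(\<lambda>t. exp (- \<i> * of_int n * of_real t)) \<in> borel_measurable MM"
      by (intro continuous_imp_measurable_on_sets_lebesgue continuous_intros) auto
    have "AE t in MM. f t * exp (- \<i> * of_int n * of_real t) = g t * exp (- \<i> * of_int n * of_real t)"
      using C by eventually_elim (simp add: g_def)
    then have "integral\<^sup>L MM (\<lambda>t. f t * exp (- \<i> * of_int n * of_real t)) = integral\<^sup>L MM (\<lambda>t. g t * exp (- \<i> * of_int n * of_real t))"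
      by (intro integral_cong_AE) measurable
    then show ?thesis unfolding fourier_def by simp
  qed
  show ?thesis
    using bessel_bounded[OF gm gb] unfolding fg by blast
qed


theorem theorem3p1:
  fixes \<Phi> :: "mat \<Rightarrow> mat"
  assumes ucp: "ucp_on Diag \<Phi>"
    and cov: "\<forall>D\<in>Diag. \<Phi> (mmul (mmul (bshift 1) D) (bshift (-1)))
                 = mmul (mmul (bshift 1) (\<Phi> D)) (bshift (-1))"
  shows "\<exists>\<Gamma> :: mat \<Rightarrow> mat.
           ucp_on BL \<Gamma>
         \<and> (\<forall>L\<in>Laurent. \<forall>A\<in>BL. \<Gamma> (mmul L A) = mmul L (\<Gamma> A)
                              \<and> \<Gamma> (mmul A L) = mmul (\<Gamma> A) L)
         \<and> (\<forall>A\<in>BL. \<forall>n. fcoeff (\<Gamma> A) n = \<Phi> (fcoeff A n))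
         \<and> ((\<forall>D\<in>Diag. \<Phi> (\<Phi> D) = \<Phi> D) \<longrightarrow> (\<forall>A\<in>BL. \<Gamma> (\<Gamma> A) = \<Gamma> A))"
proof -
  interpret covphi \<Phi> using ucp cov by unfold_locales
  have lau: "\<forall>L\<in>Laurent. \<forall>A\<in>BL. Gam (mmul L A) = mmul L (Gam A) \<and> Gam (mmul A L) = mmul (Gam A) L"
  proof (intro ballI)
    fix L A assume L: "L \<in> Laurent" and A: "A \<in> BL"
    obtain f where f: "f \<in> Linfty" and Lf: "L = (\<lambda>i j. fourier f (i - j))"
      using L unfolding Laurent_def by blast
    obtain Ca where Ca: "\<And>N. finite N \<Longrightarrow> (\<Sum>n\<in>N. (cmod (fourier f n))\<^sup>2) \<le> Ca"
      using laurent_sq[OF f] by blast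
    show "Gam (mmul L A) = mmul L (Gam A) \<and> Gam (mmul A L) = mmul (Gam A) L"
      unfolding Lf by (rule Gam_laurent[OF Ca A])
  qed
  show ?thesis
    using Gam_ucp lau Gam_fcoeff Gam_idem by (intro exI[of _ Gam]) blast
qed

end
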